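(* Let $a,b,u,v$ be integers with $b>a\ge2$ and $u,v\ge2$, and set $X:=ab-a-b$. Suppose that (1) $a$, $b$ and $uv-1$ are pairwise coprime; (2) $\frac{1}{a}+\frac{1}{b}+\frac{v}{uv-1}>1$; (3) $vab-1=(uv-1)X$. If $u=2$ then $2\le a\le5$, and if $u=3$ then $a\in\{2,3\}$. *)

theory Defs
  imports Complex_Main
begin

end

theory Submission
  imports Defs
begin

theorem lemma3p5:
  fixes a b u v :: int
  assumes "2 \<le> a" and "a < b" and "2 \<le> u" and "2 \<le> v"
    and "coprime a b" and "coprime a (u*v - 1)" and "coprime b (u*v - 1)"
    and "1 / real_of_int a + 1 / real_of_int b + real_of_int v / real_of_int (u*v - 1) > 1"
    and "v*a*b - 1 = (u*v - 1) * (a*b - a - b)"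
  shows "(u = 2 \<longrightarrow> 2 \<le> a \<and> a \<le> 5) \<and> (u = 3 \<longrightarrow> a \<in> {2, 3})"
proof (rule conjI; rule impI)
  assume u: "u = 2"
  show "2 \<le> a \<and> a \<le> 5"
  proof (intro conjI)
  show "2 \<le> a" by fact
  show "a \<le> 5"
  proof (rule ccontr)
    assume "\<not> a \<le> 5"
    hence a6: "a \<ge> 6" by simp
    have eq: "v * ((a-2)*(b-2) - 4) = a*b - a - b - 1"
      using assms(9) u by (simp add: algebra_simps)
    have p1: "(a-2)*(b-2) \<ge> 4*5" using a6 assms(2) by (intro mult_mono) auto
    have "v * ((a-2)*(b-2) - 4) \<ge> 2 * ((a-2)*(b-2) - 4)"
      using p1 assms(4) by (intro mult_right_mono) auto
    hence le: "(a-3)*(b-3) \<le> 8" using eq by (simp add: algebra_simps)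
    have "(a-3)*(b-3) \<ge> 3*4" using a6 assms(2) by (intro mult_mono) auto
    thus False using le by simp
  qed
  qed
next
  assume u: "u = 3"
  show "a \<in> {2,3}"
  proof (cases "a = 3")
    case True thus ?thesis by simp
  next
  case False
  note u = u False
  have eq: "v * (2*a*b - 3*a - 3*b) = a*b - a - b - 1"
    using assms(9) u by (simp add: algebra_simps)
  show ?thesis
  proof (rule ccontr)
    assume "a \<notin> {2,3}"
    hence a4: "a \<ge> 4" using u assms(1) by simp
    have p1: "a*(2*b-3) \<ge> 4*(2*b-3)" using a4 assms(2) by (intro mult_right_mono) auto
    have p2: "a*(3*b-5) \<ge> 4*(3*b-5)" using a4 assms(2) by (intro mult_right_mono) auto
    have pos: "2*a*b - 3*a - 3*b \<ge> 0" using p1 assms(2) a4 by (simp add: algebra_simps)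
    have "v * (2*a*b - 3*a - 3*b) \<ge> 2 * (2*a*b - 3*a - 3*b)"
      using pos assms(4) by (intro mult_right_mono) auto
    hence "3*a*b \<le> 5*a + 5*b - 1" using eq by (simp add: algebra_simps)
    thus False using p2 assms(2) a4 by (simp add: algebra_simps)
  qed
  qed
qed

end
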